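(* Let $\mathcal A$ be the non-associative algebra whose atoms are $e,e',a,\breve a$, with identity $1'=e+e'$, $e,e'$ self-converse, $a$ and $\breve a$ converses of each other, and composition of atoms given by: $e;e=e$, $e;e'=0$, $e;a=a$, $e;\breve a=0$; $e';e=0$, $e';e'=e'$, $e';a=0$, $e';\breve a=\breve a$; $a;e=0$, $a;e'=a$, $a;a=a$, $a;\breve a=a+\breve a+e$; $\breve a;e=\breve a$, $\breve a;e'=0$, $\breve a;a=a+\breve a+e'$, $\breve a;\breve a=\breve a$ (extended to all elements by additivity; $\mathcal A$ is the complex algebra of this atom structure). Then $\mathcal A$ is a non-associative algebra which is not associative, has a feeble representation (e.g. over the base $\{0,1\}$ with $e\mapsto\{(0,0)\}$, $e'\mapsto\{(1,1)\}$, $a\mapsto\{(0,1)\}$, $\breve a\mapsto\{(1,0)\}$), but has no qualitative representation.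
   Context: A non-associative algebra is an algebra $(A,0,1,+,-,1',\breve{\ },;)$ such that $(A,0,1,+,-)$ is a boolean algebra (with $x\cdot y=-(-x+-y)$, $x\le y\iff x+y=y$); $1';x=x=x;1'$, $\breve{\breve x}=x$, $(x;y)\breve{}=\breve y;\breve x$; $\breve 0=x;0=0$, $(x+y)\breve{}=\breve x+\breve y$, $x;(y+z)=x;y+x;z$; and the Peircean law: $x;y\cdot\breve z=0$ iff $y;z\cdot\breve x=0$. For a map $\phi:A\to\wp(D\times D)$ consider the conditions: $\phi$ injective, $0^\phi=\varnothing$, $1^\phi=D\times D$, $(1')^\phi=\{(x,x):x\in D\}$, $(a+b)^\phi=a^\phi\cup b^\phi$, $(-a)^\phi=(D\times D)\setminus a^\phi$, $(\breve a)^\phi=\{(y,x):(x,y)\in a^\phi\}$. Such $\phi$ is a feeble representation if also $(a;b)^\phi\supseteq a^\phi\circ b^\phi$ for all $a,b$, and a qualitative representation if also $c^\phi\supseteq a^\phi\circ b^\phi\iff c\ge a;b$ for all $a,b,c$ ($\circ$ is relational composition). *)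

theory Defs
  imports Main
begin

record 'a na_struct =
  nzero :: 'a
  none :: 'a
  nplus :: "'a \<Rightarrow> 'a \<Rightarrow> 'a"
  nminus :: "'a \<Rightarrow> 'a"
  nid :: 'a
  nconv :: "'a \<Rightarrow> 'a"
  ncomp :: "'a \<Rightarrow> 'a \<Rightarrow> 'a"

definition nmeet :: "('a, 'b) na_struct_scheme \<Rightarrow> 'a \<Rightarrow> 'a \<Rightarrow> 'a" where
  "nmeet S x y = nminus S (nplus S (nminus S x) (nminus S y))"

definition nle :: "('a, 'b) na_struct_scheme \<Rightarrow> 'a \<Rightarrow> 'a \<Rightarrow> bool" where
  "nle S x y \<longleftrightarrow> nplus S x y = y"

definition boolean_alg :: "('a, 'b) na_struct_scheme \<Rightarrow> bool" where
  "boolean_alg S \<longleftrightarrow>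
     (\<forall>x y z. nplus S x (nplus S y z) = nplus S (nplus S x y) z) \<and>
     (\<forall>x y z. nmeet S x (nmeet S y z) = nmeet S (nmeet S x y) z) \<and>
     (\<forall>x y. nplus S x y = nplus S y x) \<and>
     (\<forall>x y. nmeet S x y = nmeet S y x) \<and>
     (\<forall>x y. nplus S x (nmeet S x y) = x) \<and>
     (\<forall>x y. nmeet S x (nplus S x y) = x) \<and>
     (\<forall>x y z. nmeet S x (nplus S y z) = nplus S (nmeet S x y) (nmeet S x z)) \<and>
     (\<forall>x. nplus S x (nzero S) = x) \<and>
     (\<forall>x. nmeet S x (none S) = x) \<and>
     (\<forall>x. nplus S x (nminus S x) = none S) \<and>
     (\<forall>x. nmeet S x (nminus S x) = nzero S)"

definition na_algebra :: "('a, 'b) na_struct_scheme \<Rightarrow> bool" where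
  "na_algebra S \<longleftrightarrow> boolean_alg S \<and>
     (\<forall>x. ncomp S (nid S) x = x \<and> ncomp S x (nid S) = x) \<and>
     (\<forall>x. nconv S (nconv S x) = x) \<and>
     (\<forall>x y. nconv S (ncomp S x y) = ncomp S (nconv S y) (nconv S x)) \<and>
     nconv S (nzero S) = nzero S \<and>
     (\<forall>x. ncomp S x (nzero S) = nzero S) \<and>
     (\<forall>x y. nconv S (nplus S x y) = nplus S (nconv S x) (nconv S y)) \<and>
     (\<forall>x y z. ncomp S x (nplus S y z) = nplus S (ncomp S x y) (ncomp S x z)) \<and>
     (\<forall>x y z. nmeet S (ncomp S x y) (nconv S z) = nzero S \<longleftrightarrow>
              nmeet S (ncomp S y z) (nconv S x) = nzero S)"

definition na_associative :: "('a, 'b) na_struct_scheme \<Rightarrow> bool" where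
  "na_associative S \<longleftrightarrow> (\<forall>x y z. ncomp S x (ncomp S y z) = ncomp S (ncomp S x y) z)"

definition proper_map :: "('a, 'b) na_struct_scheme \<Rightarrow> 'c set \<Rightarrow> ('a \<Rightarrow> ('c \<times> 'c) set) \<Rightarrow> bool" where
  "proper_map S D \<phi> \<longleftrightarrow>
     inj \<phi> \<and>
     \<phi> (nzero S) = {} \<and>
     \<phi> (none S) = D \<times> D \<and>
     \<phi> (nid S) = {(x, x) | x. x \<in> D} \<and>
     (\<forall>a b. \<phi> (nplus S a b) = \<phi> a \<union> \<phi> b) \<and>
     (\<forall>a. \<phi> (nminus S a) = (D \<times> D) - \<phi> a) \<and>
     (\<forall>a. \<phi> (nconv S a) = {(y, x). (x, y) \<in> \<phi> a})"

definition feeble_rep :: "('a, 'b) na_struct_scheme \<Rightarrow> 'c set \<Rightarrow> ('a \<Rightarrow> ('c \<times> 'c) set) \<Rightarrow> bool" where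
  "feeble_rep S D \<phi> \<longleftrightarrow> proper_map S D \<phi> \<and>
     (\<forall>a b. \<phi> a O \<phi> b \<subseteq> \<phi> (ncomp S a b))"

definition qualitative_rep :: "('a, 'b) na_struct_scheme \<Rightarrow> 'c set \<Rightarrow> ('a \<Rightarrow> ('c \<times> 'c) set) \<Rightarrow> bool" where
  "qualitative_rep S D \<phi> \<longleftrightarrow> proper_map S D \<phi> \<and>
     (\<forall>a b c. \<phi> a O \<phi> b \<subseteq> \<phi> c \<longleftrightarrow> nle S (ncomp S a b) c)"

datatype atom = E | E' | At | Atc

fun conv_at :: "atom \<Rightarrow> atom" where
  "conv_at E = E" | "conv_at E' = E'" | "conv_at At = Atc" | "conv_at Atc = At"

fun comp_at :: "atom \<Rightarrow> atom \<Rightarrow> atom set" where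
  "comp_at E E = {E}" | "comp_at E E' = {}" | "comp_at E At = {At}" | "comp_at E Atc = {}"
| "comp_at E' E = {}" | "comp_at E' E' = {E'}" | "comp_at E' At = {}" | "comp_at E' Atc = {Atc}"
| "comp_at At E = {}" | "comp_at At E' = {At}" | "comp_at At At = {At}" | "comp_at At Atc = {At, Atc, E}"
| "comp_at Atc E = {Atc}" | "comp_at Atc E' = {}" | "comp_at Atc At = {At, Atc, E'}" | "comp_at Atc Atc = {Atc}"

definition cA :: "atom set na_struct" where
  "cA = \<lparr> nzero = {}, none = UNIV, nplus = (\<union>), nminus = uminus, nid = {E, E'},
          nconv = (\<lambda>X. conv_at ` X),
          ncomp = (\<lambda>X Y. \<Union>{comp_at x y | x y. x \<in> X \<and> y \<in> Y}) \<rparr>"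

end

theory Submission
  imports Defs
begin

lemma cA_simps[simp]: "nzero cA = {}" "none cA = UNIV" "nplus cA = (\<union>)" "nminus cA = uminus"
  "nid cA = {E, E'}" "nconv cA = (\<lambda>X. conv_at ` X)"
  by (simp_all add: cA_def)

lemma ncomp_cA[simp]: "ncomp cA X Y = {z. \<exists>x\<in>X. \<exists>y\<in>Y. z \<in> comp_at x y}"
  by (auto simp: cA_def)

lemma nmeet_cA[simp]: "nmeet cA X Y = X \<inter> Y"
  by (auto simp: nmeet_def)

lemma nle_cA[simp]: "nle cA X Y \<longleftrightarrow> X \<subseteq> Y"
  by (auto simp: nle_def)

lemma atom_all: "(\<forall>x::atom. P x) \<longleftrightarrow> P E \<and> P E' \<and> P At \<and> P Atc"
  by (metis atom.exhaust)

lemma atom_ex: "(\<exists>x::atom. P x) \<longleftrightarrow> P E \<or> P E' \<or> P At \<or> P Atc"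
  by (metis atom.exhaust)

lemma conv_inv[simp]: "conv_at (conv_at x) = x"
  by (cases x) auto

lemma id_l: "(z \<in> comp_at E y \<or> z \<in> comp_at E' y) \<longleftrightarrow> z = y"
  by (cases y; cases z) auto

lemma id_r: "(z \<in> comp_at y E \<or> z \<in> comp_at y E') \<longleftrightarrow> z = y"
  by (cases y; cases z) auto

lemma conv_comp: "conv_at z \<in> comp_at x y \<longleftrightarrow> z \<in> comp_at (conv_at y) (conv_at x)"
  by (cases x; cases y; cases z) auto

lemma peirce_at: "conv_at z \<in> comp_at x y \<longleftrightarrow> conv_at x \<in> comp_at y z"
  by (cases x; cases y; cases z) auto

lemma na: "na_algebra cA"
proof -
  have b: "boolean_alg cA" unfolding boolean_alg_def by auto
  have i: "\<forall>x. ncomp cA (nid cA) x = x \<and> ncomp cA x (nid cA) = x"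
  proof (intro allI conjI)
    fix X :: "atom set"
    show "ncomp cA (nid cA) X = X"
    proof (auto, goal_cases)
      case (1 z y) thus ?case using id_l[of z y] by auto
    next
      case (2 z y) thus ?case using id_l[of z y] by auto
    next
      case (3 z) thus ?case using id_l[of z z] by auto
    qed
    show "ncomp cA X (nid cA) = X"
    proof (auto, goal_cases)
      case (1 z y) thus ?case using id_r[of z y] by auto
    next
      case (2 z y) thus ?case using id_r[of z y] by auto
    next
      case (3 z) thus ?case using id_r[of z z] by auto
    qed
  qed
  have c: "\<forall>x y. nconv cA (ncomp cA x y) = ncomp cA (nconv cA y) (nconv cA x)"
  proof (intro allI)
    fix X Y
    show "nconv cA (ncomp cA X Y) = ncomp cA (nconv cA Y) (nconv cA X)"
    proof (rule equalityI; rule subsetI)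
      fix w assume "w \<in> nconv cA (ncomp cA X Y)"
      then obtain z x y where "w = conv_at z" "x \<in> X" "y \<in> Y" "z \<in> comp_at x y" by auto
      hence "w \<in> comp_at (conv_at y) (conv_at x)" using conv_comp[of w x y] by simp
      thus "w \<in> ncomp cA (nconv cA Y) (nconv cA X)" using \<open>x \<in> X\<close> \<open>y \<in> Y\<close> by auto
    next
      fix w assume "w \<in> ncomp cA (nconv cA Y) (nconv cA X)"
      then obtain x y where "x \<in> X" "y \<in> Y" "w \<in> comp_at (conv_at y) (conv_at x)" by auto
      hence "conv_at w \<in> comp_at x y" using conv_comp[of w x y] by simp
      hence m: "conv_at w \<in> {z. \<exists>x\<in>X. \<exists>y\<in>Y. z \<in> comp_at x y}" using \<open>x \<in> X\<close> \<open>y \<in> Y\<close> by blast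
      show "w \<in> nconv cA (ncomp cA X Y)" by simp (rule image_eqI[OF _ m], simp)
    qed
  qed
  have p: "\<forall>x y z. nmeet cA (ncomp cA x y) (nconv cA z) = nzero cA \<longleftrightarrow>
              nmeet cA (ncomp cA y z) (nconv cA x) = nzero cA"
  proof (intro allI)
    fix X Y Z
    show "nmeet cA (ncomp cA X Y) (nconv cA Z) = nzero cA \<longleftrightarrow>
              nmeet cA (ncomp cA Y Z) (nconv cA X) = nzero cA"
    proof -
      have L: "\<And>X Y Z. ({w. \<exists>x\<in>X. \<exists>y\<in>Y. w \<in> comp_at x y} \<inter> conv_at ` Z = {}) \<longleftrightarrow>
          \<not>(\<exists>x\<in>X. \<exists>y\<in>Y. \<exists>z\<in>Z. conv_at z \<in> comp_at x y)" by blast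
      have "(\<exists>x\<in>X. \<exists>y\<in>Y. \<exists>z\<in>Z. conv_at z \<in> comp_at x y) \<longleftrightarrow>
            (\<exists>y\<in>Y. \<exists>z\<in>Z. \<exists>x\<in>X. conv_at x \<in> comp_at y z)" using peirce_at by blast
      thus ?thesis by (simp only: cA_simps ncomp_cA nmeet_cA L)
    qed
  qed
  have v: "\<forall>x. nconv cA (nconv cA x) = x" by (simp add: image_image)
  show ?thesis unfolding na_algebra_def using b i c p v by auto
qed

lemma noAtc: "Atc \<notin> comp_at E y"
  by (cases y) auto

lemma nonassoc: "\<not> na_associative cA"
proof
  assume "na_associative cA"
  hence eq: "ncomp cA {E} (ncomp cA {At} {Atc}) = ncomp cA (ncomp cA {E} {At}) {Atc}"
    unfolding na_associative_def by blast
  have "At \<in> ncomp cA {E} {At}" by simp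
  hence "Atc \<in> ncomp cA (ncomp cA {E} {At}) {Atc}" unfolding ncomp_cA
    by (smt (verit) comp_at.simps(12) insertCI mem_Collect_eq)
  hence "Atc \<in> ncomp cA {E} (ncomp cA {At} {Atc})" using eq by simp
  thus False unfolding ncomp_cA using noAtc by blast
qed

fun pt :: "atom \<Rightarrow> nat \<times> nat" where
  "pt E = (0,0)" | "pt E' = (1,1)" | "pt At = (0,1)" | "pt Atc = (1,0)"

lemma inj_pt: "inj pt"
  unfolding inj_def by (auto simp: atom_all)

definition phi0 :: "atom set \<Rightarrow> (nat \<times> nat) set" where
  "phi0 X = pt ` X"

lemma univ_atom: "(UNIV::atom set) = {E,E',At,Atc}"
  using atom.exhaust by blast

lemma range_pt: "range pt = {0,1::nat} \<times> {0,1}"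
  by (simp add: univ_atom) auto

lemma pt_conv: "pt (conv_at x) = prod.swap (pt x)"
  by (cases x) auto

lemma pt_comp: "snd (pt x) = fst (pt y) \<Longrightarrow> (fst (pt x), snd (pt y)) \<in> pt ` comp_at x y"
  by (cases x; cases y) auto

lemma feeble: "feeble_rep cA {0,1::nat} phi0"
  unfolding feeble_rep_def proper_map_def
proof (intro conjI allI)
  show "inj phi0" unfolding phi0_def inj_def using inj_image_eq_iff[OF inj_pt] by blast
  show "phi0 (nzero cA) = {}" by (simp add: phi0_def)
  show "phi0 (none cA) = {0,1} \<times> {0,1}" using range_pt by (simp add: phi0_def)
  show "phi0 (nid cA) = {(x, x) |x. x \<in> {0,1}}" by (auto simp: phi0_def)
  fix a b
  show "phi0 (nplus cA a b) = phi0 a \<union> phi0 b" by (simp add: phi0_def image_Un)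
  show "phi0 (nminus cA a) = {0,1} \<times> {0,1} - phi0 a"
    using range_pt image_set_diff[OF inj_pt, of UNIV a] by (simp add: phi0_def Compl_eq_Diff_UNIV)
  show "phi0 (nconv cA a) = {(y, x). (x, y) \<in> phi0 a}"
  proof
    show "phi0 (nconv cA a) \<subseteq> {(y, x). (x, y) \<in> phi0 a}"
    proof clarify
      fix u v assume "(u,v) \<in> phi0 (nconv cA a)"
      then obtain x where "x \<in> a" "(u,v) = pt (conv_at x)" unfolding phi0_def by auto
      hence "(v,u) = pt x" by (simp add: pt_conv prod.swap_def)
      thus "(v,u) \<in> phi0 a" unfolding phi0_def using \<open>x \<in> a\<close> by auto
    qed
    show "{(y, x). (x, y) \<in> phi0 a} \<subseteq> phi0 (nconv cA a)"
    proof clarify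
      fix u v assume "(v,u) \<in> phi0 a"
      then obtain x where "x \<in> a" "(v,u) = pt x" unfolding phi0_def by blast
      hence "(u,v) = pt (conv_at x)" unfolding pt_conv by (metis swap_simp)
      thus "(u,v) \<in> phi0 (nconv cA a)" unfolding phi0_def using \<open>x \<in> a\<close> by auto
    qed
  qed
  show "phi0 a O phi0 b \<subseteq> phi0 (ncomp cA a b)"
  proof
    fix p assume "p \<in> phi0 a O phi0 b"
    then obtain x y where xy: "x \<in> a" "y \<in> b" "snd (pt x) = fst (pt y)" "p = (fst (pt x), snd (pt y))"
      unfolding phi0_def by (auto, metis fst_conv snd_conv)
    from pt_comp[OF xy(3)] obtain z where "z \<in> comp_at x y" "p = pt z" using xy(4) by auto
    thus "p \<in> phi0 (ncomp cA a b)" using xy unfolding phi0_def by auto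
  qed
qed

lemma noqual: "\<not> qualitative_rep cA D \<phi>"
proof
  assume q: "qualitative_rep cA D \<phi>"
  have pm: "proper_map cA D \<phi>" using q by (simp add: qualitative_rep_def)
  have Q: "\<And>a b c. \<phi> a O \<phi> b \<subseteq> \<phi> c \<longleftrightarrow> ncomp cA a b \<subseteq> c"
    using q by (simp add: qualitative_rep_def)
  have un: "\<And>a b. \<phi> (a \<union> b) = \<phi> a \<union> \<phi> b" using pm by (simp add: proper_map_def)
  have mi: "\<And>a. \<phi> (- a) = D \<times> D - \<phi> a" using pm by (simp add: proper_map_def)
  have ze: "\<phi> {} = {}" using pm by (simp add: proper_map_def)
  have idd: "\<phi> {E, E'} = {(x, x) |x. x \<in> D}" using pm by (simp add: proper_map_def)
  have cv: "\<phi> {Atc} = {(y, x). (x, y) \<in> \<phi> {At}}"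
  proof -
    have "\<phi> (nconv cA {At}) = {(y, x). (x, y) \<in> \<phi> {At}}" using pm unfolding proper_map_def by blast
    moreover have "nconv cA {At} = {Atc}" by simp
    ultimately show ?thesis by simp
  qed
  have top: "\<phi> UNIV = D \<times> D" using pm by (simp add: proper_map_def)
  have sub: "\<And>a. \<phi> a \<subseteq> D \<times> D" proof -
    fix a
    have "\<phi> UNIV = \<phi> a \<union> \<phi> UNIV" using un[of a UNIV] by simp
    thus "\<phi> a \<subseteq> D \<times> D" using top by blast
  qed
  have "ncomp cA {E'} {At} \<subseteq> {}" by simp
  hence c1: "\<phi> {E'} O \<phi> {At} = {}" using Q[of "{E'}" "{At}" "{}"] ze by simp
  have "ncomp cA {At} {E} \<subseteq> {}" by simp
  hence c2: "\<phi> {At} O \<phi> {E} = {}" using Q[of "{At}" "{E}" "{}"] ze by simp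
  have "At \<in> ncomp cA {At} {Atc}" unfolding ncomp_cA by simp
  hence "\<not> ncomp cA {At} {Atc} \<subseteq> - {At}" by blast
  hence "\<not> \<phi> {At} O \<phi> {Atc} \<subseteq> \<phi> (- {At})" using Q[of "{At}" "{Atc}" "- {At}"] by (simp only: not_False_eq_True)
  then obtain p where p1: "p \<in> \<phi> {At} O \<phi> {Atc}" and p2: "p \<notin> \<phi> (- {At})" by blast
  have "p \<in> D \<times> D" using p1 sub by blast
  hence p3: "p \<in> \<phi> {At}" using p2 mi[of "{At}"] by blast
  obtain x y z where xyz: "(x,y) \<in> \<phi> {At}" "(y,z) \<in> \<phi> {Atc}" "p = (x,z)" using p1 by blast
  have xyz3: "(x,z) \<in> \<phi> {At}" using p3 xyz(3) by simp
  have zy: "(z,y) \<in> \<phi> {At}" using xyz(2) cv by auto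
  have "z \<in> D" using zy sub by blast
  hence "(z,z) \<in> \<phi> {E, E'}" using idd by auto
  hence "(z,z) \<in> \<phi> {E} \<or> (z,z) \<in> \<phi> {E'}" using un[of "{E}" "{E'}"] insert_is_Un[of E "{E'}"] by (simp only:) blast
  moreover have "(z,z) \<notin> \<phi> {E'}" using c1 zy by blast
  moreover have "(z,z) \<notin> \<phi> {E}" using c2 xyz3 by blast
  ultimately show False by blast
qed

theorem mainTheorem13:
  shows "na_algebra cA \<and> \<not> na_associative cA \<and>
         (\<exists>(D :: nat set) \<phi>. feeble_rep cA D \<phi>) \<and>
         \<not> (\<exists>(D :: 'b set) (\<phi> :: atom set \<Rightarrow> ('b \<times> 'b) set). qualitative_rep cA D \<phi>)"
proof (intro conjI)
  show "na_algebra cA" by (rule na)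
  show "\<not> na_associative cA" by (rule nonassoc)
  show "\<exists>(D :: nat set) \<phi>. feeble_rep cA D \<phi>" using feeble by blast
  show "\<not> (\<exists>(D :: 'b set) (\<phi> :: atom set \<Rightarrow> ('b \<times> 'b) set). qualitative_rep cA D \<phi>)"
    using noqual by blast
qed

end
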